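(* Let $M$ be a manifold with a complete Riemannian metric $g_R$ and associated distance $d_R$. Let $S$ be a closed subset of $M$ and $\mathcal{W}=\{W_\alpha:\alpha\in\mathcal{I}\}$ a collection of open subsets of $M$ covering $S$, such that each $W_\alpha$ is contained in an open subset $\mathcal{C}_\alpha$ whose $d_R$-diameter is smaller than $1$. Then there exists a subcollection $\mathcal{W}'=\{W_j: j\in\mathbb{N}\}\subset\mathcal{W}$ which covers $S$ and is locally finite (i.e., each $p\in\bigcup_j W_j$ has a neighborhood $V$ with $V\cap W_j=\emptyset$ for all but finitely many $j$). Moreover, the collection $\{\mathcal{C}_j: j\in\mathbb{N}\}$, where $\mathcal{C}_j$ is the open set containing $W_j$, is locally finite too. *)

theory Defs
  imports "HOL-Analysis.Analysis"
begin

definition locally_finite_family :: "'i set \<Rightarrow> ('i \<Rightarrow> 'a::topological_space set) \<Rightarrow> bool" where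
  "locally_finite_family J F \<longleftrightarrow>
     (\<forall>p \<in> (\<Union>j\<in>J. F j). \<exists>V. open V \<and> p \<in> V \<and> finite {j\<in>J. V \<inter> F j \<noteq> {}})"

text \<open>Metric spaces in which closed bounded sets are compact (Heine--Borel property).
  By Hopf--Rinow, a (connected) manifold with complete Riemannian metric, equipped
  with its Riemannian distance, is such a space.\<close>
definition proper_metric :: "'a::metric_space itself \<Rightarrow> bool" where
  "proper_metric _ \<longleftrightarrow> (\<forall>K::'a set. bounded K \<and> closed K \<longrightarrow> compact K)"

end

theory Submission
  imports Defs
begin

theorem lemma4p13:
  fixes S :: "'a::metric_space set"
    and I :: "'i set"
    and W C :: "'i \<Rightarrow> 'a set"
  assumes proper: "proper_metric TYPE('a)"
    and closedS: "closed S"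
    and openW: "\<forall>\<alpha>\<in>I. open (W \<alpha>)"
    and cover: "S \<subseteq> (\<Union>\<alpha>\<in>I. W \<alpha>)"
    and openC: "\<forall>\<alpha>\<in>I. open (C \<alpha>)"
    and WC: "\<forall>\<alpha>\<in>I. W \<alpha> \<subseteq> C \<alpha>"
    and diamC: "\<forall>\<alpha>\<in>I. bounded (C \<alpha>) \<and> diameter (C \<alpha>) < 1"
  shows "\<exists>J \<subseteq> I. countable J \<and> S \<subseteq> (\<Union>j\<in>J. W j)
            \<and> locally_finite_family J W \<and> locally_finite_family J C"
proof -
  define x0 :: 'a where "x0 = undefined"
  define K where "K n = S \<inter> cball x0 (real n + 1) - ball x0 (real n)" for n :: nat
  have Kc: "compact (K n)" for n
  proof -
    have "closed (K n)" unfolding K_def using closedS by (intro closed_Diff closed_Int) auto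
    moreover have "bounded (K n)" unfolding K_def by (rule bounded_subset[OF bounded_cball]) auto
    ultimately show ?thesis using proper unfolding proper_metric_def by blast
  qed
  have "\<forall>n. \<exists>F. F \<subseteq> {\<alpha>\<in>I. W \<alpha> \<inter> K n \<noteq> {}} \<and> finite F \<and> K n \<subseteq> \<Union>(W ` F)"
  proof
    fix n
    have sub: "K n \<subseteq> \<Union>(W ` {\<alpha>\<in>I. W \<alpha> \<inter> K n \<noteq> {}})"
    proof
      fix x assume x: "x \<in> K n"
      then have "x \<in> S" unfolding K_def by auto
      then obtain a where "a \<in> I" "x \<in> W a" using cover by auto
      then show "x \<in> \<Union>(W ` {\<alpha>\<in>I. W \<alpha> \<inter> K n \<noteq> {}})" using x by auto
    qed
    show "\<exists>F. F \<subseteq> {\<alpha>\<in>I. W \<alpha> \<inter> K n \<noteq> {}} \<and> finite F \<and> K n \<subseteq> \<Union>(W ` F)"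
      by (rule compactE_image[OF Kc _ sub]) (use openW in auto)
  qed
  then obtain F where F: "\<And>n. F n \<subseteq> {\<alpha>\<in>I. W \<alpha> \<inter> K n \<noteq> {}}" "\<And>n. finite (F n)"
      "\<And>n. K n \<subseteq> \<Union>(W ` F n)"
    by metis
  define J where "J = (\<Union>n. F n)"
  have JI: "J \<subseteq> I" unfolding J_def using F(1) by blast
  have cJ: "countable J" unfolding J_def using F(2) by (simp add: countable_finite)
  have covJ: "S \<subseteq> (\<Union>j\<in>J. W j)"
  proof
    fix x assume x: "x \<in> S"
    define n where "n = nat (floor (dist x0 x))"
    have "real n \<le> dist x0 x" "dist x0 x \<le> real n + 1" unfolding n_def
      by (simp_all add: of_nat_nat)
    then have "x \<in> K n" using x unfolding K_def by (auto simp: dist_commute)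
    then show "x \<in> (\<Union>j\<in>J. W j)" using F(3)[of n] unfolding J_def by blast
  qed
  have fin: "finite {j\<in>J. ball p 1 \<inter> C j \<noteq> {}}" for p
  proof -
    define N where "N = nat (ceiling (dist x0 p + 2))"
    have "{j\<in>J. ball p 1 \<inter> C j \<noteq> {}} \<subseteq> (\<Union>n\<le>N. F n)"
    proof
      fix j assume j: "j \<in> {j\<in>J. ball p 1 \<inter> C j \<noteq> {}}"
      then obtain n where jn: "j \<in> F n" unfolding J_def by auto
      then have jI: "j \<in> I" and "W j \<inter> K n \<noteq> {}" using F(1) by auto
      then obtain z where z: "z \<in> C j" "z \<in> K n" using WC by blast
      obtain y where y: "y \<in> C j" "dist p y < 1" using j by auto
      have "dist y z \<le> diameter (C j)" using diameter_bounded_bound diamC jI y z by blast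
      then have yz: "dist y z < 1" using diamC jI by force
      have "real n \<le> dist x0 z" using z unfolding K_def by auto
      moreover have "dist x0 z \<le> dist x0 p + dist p y + dist y z"
        using dist_triangle[of x0 z p] dist_triangle[of p z y] by linarith
      ultimately have "real n \<le> dist x0 p + 2" using y yz by linarith
      then have "n \<le> N" unfolding N_def by linarith
      then show "j \<in> (\<Union>n\<le>N. F n)" using jn by blast
    qed
    moreover have "finite (\<Union>n\<le>N. F n)" using F(2) by blast
    ultimately show ?thesis by (rule finite_subset)
  qed
  have lfC: "locally_finite_family J C"
    unfolding locally_finite_family_def
  proof
    fix p assume "p \<in> (\<Union>j\<in>J. C j)"
    show "\<exists>V. open V \<and> p \<in> V \<and> finite {j\<in>J. V \<inter> C j \<noteq> {}}"
      using fin[of p] by (intro exI[of _ "ball p 1"]) auto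
  qed
  have lfW: "locally_finite_family J W"
    unfolding locally_finite_family_def
  proof
    fix p assume "p \<in> (\<Union>j\<in>J. W j)"
    have "{j\<in>J. ball p 1 \<inter> W j \<noteq> {}} \<subseteq> {j\<in>J. ball p 1 \<inter> C j \<noteq> {}}"
      using WC JI by blast
    then show "\<exists>V. open V \<and> p \<in> V \<and> finite {j\<in>J. V \<inter> W j \<noteq> {}}"
      using fin[of p] finite_subset by (intro exI[of _ "ball p 1"]) auto
  qed
  show ?thesis using JI cJ covJ lfC lfW by blast
qed

end
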